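(* Let $G$ be a group, $Z\leq Z(G)$, and let $\mathcal{C}$ be a $G/Z$-conjugacy class. Let $x\in G$ be such that the image of $x$ in $G/Z$ lies in $\mathcal{C}$, and denote by $\mathcal{C}_x$ the $G$-conjugacy class of $x$. If $\mathcal{K}(G,\mathcal{C}_x)$ is connected, then $\mathcal{K}(G/Z,\mathcal{C})$ is connected. Moreover, if the order $o$ of an element of $\mathcal{C}$ is prime to the order of $Z$, then $x$ can be taken to have order $o$.
   Context: For a group $H$ and a conjugacy class $\mathcal{D}$ of $H$, $\mathcal{K}(H,\mathcal{D})$ denotes the graph with vertex set $\mathcal{D}$ in which distinct $a,b\in\mathcal{D}$ are adjacent iff $C_H(ab)\cap\mathcal{D}\neq\emptyset$. *)

theory Defs
  imports "HOL-Algebra.Algebra"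
begin

definition grp_center :: "('a, 'b) monoid_scheme \<Rightarrow> 'a set" where
  "grp_center H = {z \<in> carrier H. \<forall>g \<in> carrier H. z \<otimes>\<^bsub>H\<^esub> g = g \<otimes>\<^bsub>H\<^esub> z}"

definition grp_centralizer :: "('a, 'b) monoid_scheme \<Rightarrow> 'a \<Rightarrow> 'a set" where
  "grp_centralizer H g = {h \<in> carrier H. h \<otimes>\<^bsub>H\<^esub> g = g \<otimes>\<^bsub>H\<^esub> h}"

definition conj_class :: "('a, 'b) monoid_scheme \<Rightarrow> 'a \<Rightarrow> 'a set" where
  "conj_class H a = {h \<otimes>\<^bsub>H\<^esub> a \<otimes>\<^bsub>H\<^esub> inv\<^bsub>H\<^esub> h | h. h \<in> carrier H}"

definition K_adj :: "('a, 'b) monoid_scheme \<Rightarrow> 'a set \<Rightarrow> 'a \<Rightarrow> 'a \<Rightarrow> bool" where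
  "K_adj H D a b \<longleftrightarrow> a \<in> D \<and> b \<in> D \<and> a \<noteq> b \<and>
     grp_centralizer H (a \<otimes>\<^bsub>H\<^esub> b) \<inter> D \<noteq> {}"

definition K_connected :: "('a, 'b) monoid_scheme \<Rightarrow> 'a set \<Rightarrow> bool" where
  "K_connected H D \<longleftrightarrow> (\<forall>a \<in> D. \<forall>b \<in> D. (K_adj H D)\<^sup>*\<^sup>* a b)"

end

theory Submission
  imports Defs
begin

lemma rtranclp_map_aux:
  assumes "R\<^sup>*\<^sup>* p q"
    and "\<And>s t. R s t \<Longrightarrow> S\<^sup>*\<^sup>* (f s) (f t)"
  shows "S\<^sup>*\<^sup>* (f p) (f q)"
  using assms(1)
proof (induction rule: rtranclp_induct)
  case base then show ?case by simp
next
  case (step y z)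
  then show ?case using assms(2) by (meson rtranclp_trans)
qed

theorem lemma2p4:
  fixes G (structure) and Z :: "'a set" and C :: "'a set set" and a :: "'a set"
  assumes "group G"
    and "subgroup Z G" and "Z \<subseteq> grp_center G"
    and "a \<in> carrier (G Mod Z)" and "C = conj_class (G Mod Z) a"
  shows "(\<forall>x \<in> carrier G. Z #> x \<in> C \<longrightarrow> K_connected G (conj_class G x)
            \<longrightarrow> K_connected (G Mod Z) C)
       \<and> (\<forall>c \<in> C. finite Z \<longrightarrow> coprime (group.ord (G Mod Z) c) (card Z)
            \<longrightarrow> (\<exists>x \<in> carrier G. Z #> x \<in> C \<and> group.ord G x = group.ord (G Mod Z) c))"
proof -
  interpret G: group G by fact
  have nZ: "Z \<lhd> G"
  proof -
    have "\<forall>x\<in>carrier G. \<forall>h\<in>Z. x \<otimes> h \<otimes> inv x \<in> Z"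
    proof (intro ballI)
      fix x h assume x: "x \<in> carrier G" and h: "h \<in> Z"
      then have hc: "h \<in> carrier G" using assms(2) subgroup.subset by blast
      have "h \<otimes> x = x \<otimes> h" using h x assms(3) unfolding grp_center_def by auto
      then have "x \<otimes> h \<otimes> inv x = h \<otimes> x \<otimes> inv x" by simp
      also have "\<dots> = h" using x hc by (simp add: G.m_assoc)
      finally show "x \<otimes> h \<otimes> inv x \<in> Z" using h by simp
    qed
    then show ?thesis using G.normal_inv_iff assms(2) by blast
  qed
  interpret N: normal Z G by (fact nZ)
  define Q where "Q = G Mod Z"
  interpret Q: group Q unfolding Q_def by (rule N.factorgroup_is_group)
  define \<pi> where "\<pi> = (\<lambda>g. Z #> g)"
  have hom: "\<pi> \<in> hom G Q" unfolding \<pi>_def Q_def by (rule N.r_coset_hom_Mod)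
  interpret H: group_hom G Q \<pi> using hom by (unfold_locales)
  have surj: "carrier Q = \<pi> ` carrier G" unfolding Q_def \<pi>_def by (rule carrier_FactGroup)
  have pimul: "\<pi> (g \<otimes> h) = \<pi> g \<otimes>\<^bsub>Q\<^esub> \<pi> h" if "g \<in> carrier G" "h \<in> carrier G" for g h
    using that by simp
  have piinv: "\<pi> (inv g) = inv\<^bsub>Q\<^esub> \<pi> g" if "g \<in> carrier G" for g
    using that by (simp add: H.hom_inv)
  have pic: "\<pi> g \<in> carrier Q" if "g \<in> carrier G" for g using that by simp
  have aQ: "a \<in> carrier Q" using assms(4) Q_def by simp
  have CQ: "C = conj_class Q a" using assms(5) Q_def by simp
  have Csub: "C \<subseteq> carrier Q" unfolding CQ conj_class_def using aQ by auto
  show ?thesis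
  proof (intro conjI ballI impI)
    fix x assume x: "x \<in> carrier G" and xC: "Z #> x \<in> C"
      and conn: "K_connected G (conj_class G x)"
    from xC obtain k where k: "k \<in> carrier Q" and pix: "\<pi> x = k \<otimes>\<^bsub>Q\<^esub> a \<otimes>\<^bsub>Q\<^esub> inv\<^bsub>Q\<^esub> k"
      unfolding CQ conj_class_def \<pi>_def by auto
    have ak: "a = inv\<^bsub>Q\<^esub> k \<otimes>\<^bsub>Q\<^esub> \<pi> x \<otimes>\<^bsub>Q\<^esub> k"
      using pix k aQ by (simp add: Q.m_assoc[symmetric], simp add: Q.m_assoc)
    have img: "\<pi> g \<in> C" if g: "g \<in> conj_class G x" for g
    proof -
      from g obtain h where h: "h \<in> carrier G" and gh: "g = h \<otimes> x \<otimes> inv h"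
        unfolding conj_class_def by auto
      have "\<pi> g = \<pi> h \<otimes>\<^bsub>Q\<^esub> \<pi> x \<otimes>\<^bsub>Q\<^esub> inv\<^bsub>Q\<^esub> \<pi> h"
        using h x gh by (simp add: H.hom_inv)
      also have "\<dots> = (\<pi> h \<otimes>\<^bsub>Q\<^esub> k) \<otimes>\<^bsub>Q\<^esub> a \<otimes>\<^bsub>Q\<^esub> inv\<^bsub>Q\<^esub> (\<pi> h \<otimes>\<^bsub>Q\<^esub> k)"
        using pix h k aQ x by (simp add: Q.m_assoc Q.inv_mult_group)
      finally show ?thesis unfolding CQ conj_class_def using h k by auto
    qed
    have pre: "\<exists>g \<in> conj_class G x. u = \<pi> g" if u: "u \<in> C" for u
    proof -
      from u obtain q where q: "q \<in> carrier Q" and uq: "u = q \<otimes>\<^bsub>Q\<^esub> a \<otimes>\<^bsub>Q\<^esub> inv\<^bsub>Q\<^esub> q"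
        unfolding CQ conj_class_def by auto
      have "q \<otimes>\<^bsub>Q\<^esub> inv\<^bsub>Q\<^esub> k \<in> carrier Q" using q k by simp
      then obtain h where h: "h \<in> carrier G" and hq: "\<pi> h = q \<otimes>\<^bsub>Q\<^esub> inv\<^bsub>Q\<^esub> k"
        using surj by auto
      have "u = (q \<otimes>\<^bsub>Q\<^esub> inv\<^bsub>Q\<^esub> k) \<otimes>\<^bsub>Q\<^esub> \<pi> x \<otimes>\<^bsub>Q\<^esub> inv\<^bsub>Q\<^esub> (q \<otimes>\<^bsub>Q\<^esub> inv\<^bsub>Q\<^esub> k)"
        using uq ak q k x by (simp add: Q.m_assoc Q.inv_mult_group)
      also have "\<dots> = \<pi> (h \<otimes> x \<otimes> inv h)" using hq h x by (simp add: H.hom_inv)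
      finally show ?thesis unfolding conj_class_def using h by auto
    qed
    have step: "(K_adj Q C)\<^sup>*\<^sup>* (\<pi> s) (\<pi> t)" if st: "K_adj G (conj_class G x) s t" for s t
    proof (cases "\<pi> s = \<pi> t")
      case True then show ?thesis by simp
    next
      case False
      from st have s: "s \<in> conj_class G x" and t: "t \<in> conj_class G x"
        and d: "grp_centralizer G (s \<otimes> t) \<inter> conj_class G x \<noteq> {}"
        unfolding K_adj_def by auto
      have sc: "s \<in> carrier G" using s x unfolding conj_class_def by auto
      have tc: "t \<in> carrier G" using t x unfolding conj_class_def by auto
      from d obtain e where e1: "e \<in> carrier G" and e2: "e \<otimes> (s \<otimes> t) = (s \<otimes> t) \<otimes> e"
        and e3: "e \<in> conj_class G x"
        unfolding grp_centralizer_def by auto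
      have "\<pi> e \<otimes>\<^bsub>Q\<^esub> (\<pi> s \<otimes>\<^bsub>Q\<^esub> \<pi> t) = (\<pi> s \<otimes>\<^bsub>Q\<^esub> \<pi> t) \<otimes>\<^bsub>Q\<^esub> \<pi> e"
        using e1 e2 sc tc by (metis G.m_closed H.hom_mult)
      then have "\<pi> e \<in> grp_centralizer Q (\<pi> s \<otimes>\<^bsub>Q\<^esub> \<pi> t)"
        unfolding grp_centralizer_def using e1 by simp
      then have "K_adj Q C (\<pi> s) (\<pi> t)"
        unfolding K_adj_def using img[OF s] img[OF t] img[OF e3] False by blast
      then show ?thesis by simp
    qed
    show "K_connected (G Mod Z) C"
      unfolding K_connected_def Q_def[symmetric]
    proof (intro ballI)
      fix u v assume "u \<in> C" "v \<in> C"
      then obtain p q where p: "p \<in> conj_class G x" "u = \<pi> p" and q: "q \<in> conj_class G x" "v = \<pi> q"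
        using pre by blast
      have "(K_adj G (conj_class G x))\<^sup>*\<^sup>* p q" using conn p q unfolding K_connected_def by blast
      then show "(K_adj Q C)\<^sup>*\<^sup>* u v" using p q step rtranclp_map_aux by metis
    qed
  next
    fix c assume cC: "c \<in> C" and fin: "finite Z"
      and cop: "coprime (group.ord (G Mod Z) c) (card Z)"
    have cQ: "c \<in> carrier Q" using cC Csub by blast
    then obtain y where y: "y \<in> carrier G" and yc: "c = \<pi> y" using surj by auto
    have ordx: "Q.ord (\<pi> g) dvd G.ord g" if "g \<in> carrier G" for g
    proof -
      have "\<pi> g [^]\<^bsub>Q\<^esub> G.ord g = \<one>\<^bsub>Q\<^esub>"
        using that by (metis H.hom_nat_pow G.pow_ord_eq_1 H.hom_one)
      then show ?thesis using Q.pow_eq_id that by simp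
    qed
    define o' where "o' = Q.ord c"
    show "\<exists>x \<in> carrier G. Z #> x \<in> C \<and> group.ord G x = group.ord (G Mod Z) c"
    proof (cases "o' = 0")
      case True
      have "G.ord y = 0" using ordx[OF y] True yc o'_def by simp
      then show ?thesis using y yc cC True o'_def unfolding \<pi>_def Q_def by auto
    next
      case False
      have cop': "coprime (card Z) o'" using cop o'_def Q_def by (simp add: coprime_commute)
      have cz: "card Z \<noteq> 0" using fin assms(2) subgroup.one_closed card_0_eq by blast
      obtain m w where m: "card Z * m = o' * w + gcd (card Z) o'"
        using bezout_nat[OF cz] by blast
      then have m': "card Z * m = o' * w + 1" using cop' by simp
      define x where "x = y [^] (card Z * m)"
      have xc: "x \<in> carrier G" unfolding x_def using y by simp
      have "\<pi> x = c [^]\<^bsub>Q\<^esub> (card Z * m)" unfolding x_def using y yc by (simp add: H.hom_nat_pow)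
      also have "\<dots> = (c [^]\<^bsub>Q\<^esub> o') [^]\<^bsub>Q\<^esub> w \<otimes>\<^bsub>Q\<^esub> c"
        using m' cQ by (simp add: Q.nat_pow_mult[symmetric] Q.nat_pow_pow)
      also have "\<dots> = c"
        using cQ o'_def by simp
      finally have pixc: "\<pi> x = c" .
      have "y [^] o' \<in> Z"
      proof -
        have "\<pi> (y [^] o') = \<one>\<^bsub>Q\<^esub>" using y yc o'_def cQ by (simp add: H.hom_nat_pow)
        then show ?thesis unfolding \<pi>_def Q_def using y N.rcos_const
          by (metis G.nat_pow_closed G.coset_join1 assms(2) one_FactGroup)
      qed
      then have z1: "(y [^] o') [^] card Z = \<one>"
      proof -
        assume z: "y [^] o' \<in> Z"
        interpret ZG: group "G\<lparr>carrier := Z\<rparr>" using assms(2) by (simp add: subgroup.subgroup_is_group)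
        have "(y [^] o') [^]\<^bsub>G\<lparr>carrier := Z\<rparr>\<^esub> order (G\<lparr>carrier := Z\<rparr>) = \<one>\<^bsub>G\<lparr>carrier := Z\<rparr>\<^esub>"
          using ZG.pow_order_eq_1 z by simp
        then show ?thesis by (simp add: order_def G.nat_pow_consistent[symmetric])
      qed
      have "x [^] o' = \<one>"
      proof -
        have "x [^] o' = ((y [^] o') [^] card Z) [^] m" unfolding x_def using y
          by (simp add: G.nat_pow_pow mult.commute mult.left_commute)
        then show ?thesis using z1 by simp
      qed
      then have d1: "G.ord x dvd o'" using G.pow_eq_id xc by blast
      then have "G.ord x \<noteq> 0" using False by auto
      have d2: "o' dvd G.ord x" using ordx[OF xc] pixc o'_def by simp
      have "G.ord x = o'" using d1 d2 by (simp add: dvd_antisym)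
      then show ?thesis using xc pixc cC o'_def unfolding \<pi>_def Q_def by auto
    qed
  qed
qed

end
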